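(* Let $\mathcal{A}$ be a cost automaton over a finite alphabet $\Sigma$ and let $L \subseteq \Sigma^*$ be a regular language. The winning condition for player B in the limitedness game with bound $\infty$ (for $\mathcal{A}$ and $L$) is an $\omega$-regular language, i.e. it is recognised by a nondeterministic Büchi automaton.
   Context: A cost automaton is a nondeterministic finite automaton (finite input alphabet, finite set of states, set of initial states, set of final states, finite set of transitions, each transition reading one input letter) additionally equipped with a finite totally ordered set of counters $0,\ldots,n$. For each counter $c$ there is a distinguished subset of transitions that increment $c$ and a distinguished subset of transitions that reset $c$; every transition that resets or increments counter $c$ must also reset all counters $0,\ldots,c-1$. A (finite or infinite) run is a consistent sequence of transitions (the target of each transition equals the source of the next) whose first transition starts in an initial state; a finite run is accepting if it ends in a final state. For sets of transitions $\delta_1,\delta_2,\ldots$, a run in $\delta_1\cdots\delta_i$ (resp. in $\delta_1\delta_2\cdots$) is a run whose $j$-th transition belongs to $\delta_j$ for every $j$. The limitedness game with bound $\infty$ is the following Gale-Stewart game (two players alternate for $\omega$ rounds, player A choosing a letter of his alphabet and then player B a letter of hers, producing an infinite word $a_1\delta_1a_2\delta_2\cdots$; player B wins iff this word lies in the winning condition). Player A's alphabet is $\Sigma$. Player B's alphabet is the set of all sets $\delta$ of transitions of $\mathcal{A}$ such that all transitions in $\delta$ read the same letter $a$ (formally, the union over $a\in\Sigma$ of the sets of sets of transitions reading $a$). The winning condition for player B is the set of sequences $a_1\delta_1a_2\delta_2\cdots$ such that for every $i$: (1) every transition in $\delta_i$ reads the letter $a_i$; (2') for every infinite run in $\delta_1\delta_2\cdots$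 and every counter $c$, if the run increments $c$ infinitely often then it resets $c$ infinitely often; (3) if $a_1\cdots a_i\in L$ then some run in $\delta_1\cdots\delta_i$ is accepting. *)

theory Defs
  imports Main
begin

record ('q, 'a) nfa =
  nfa_states :: "'q set"
  nfa_init   :: "'q set"
  nfa_trans  :: "('q \<times> 'a \<times> 'q) set"
  nfa_final  :: "'q set"

definition nfa_wf :: "'a set \<Rightarrow> ('q, 'a) nfa \<Rightarrow> bool" where
  "nfa_wf \<Sigma> N \<longleftrightarrow> finite (nfa_states N) \<and> nfa_init N \<subseteq> nfa_states N
     \<and> nfa_final N \<subseteq> nfa_states N
     \<and> nfa_trans N \<subseteq> nfa_states N \<times> \<Sigma> \<times> nfa_states N"

definition nfa_accepts :: "('q, 'a) nfa \<Rightarrow> 'a list \<Rightarrow> bool" where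
  "nfa_accepts N w \<longleftrightarrow> (\<exists>r :: nat \<Rightarrow> 'q. r 0 \<in> nfa_init N
     \<and> (\<forall>k < length w. (r k, w ! k, r (Suc k)) \<in> nfa_trans N)
     \<and> r (length w) \<in> nfa_final N)"

definition regular_lang :: "'a set \<Rightarrow> 'a list set \<Rightarrow> bool" where
  "regular_lang \<Sigma> L \<longleftrightarrow> (\<exists>N :: (nat, 'a) nfa. nfa_wf \<Sigma> N \<and> L = {w. nfa_accepts N w})"

record ('q, 'b) buchi =
  bu_states :: "'q set"
  bu_init   :: "'q set"
  bu_trans  :: "('q \<times> 'b \<times> 'q) set"
  bu_acc    :: "'q set"

definition buchi_wf :: "'b set \<Rightarrow> ('q, 'b) buchi \<Rightarrow> bool" where
  "buchi_wf \<Gamma> B \<longleftrightarrow> finite (bu_states B) \<and> bu_init B \<subseteq> bu_states B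
     \<and> bu_acc B \<subseteq> bu_states B
     \<and> bu_trans B \<subseteq> bu_states B \<times> \<Gamma> \<times> bu_states B"

definition buchi_accepts :: "('q, 'b) buchi \<Rightarrow> (nat \<Rightarrow> 'b) \<Rightarrow> bool" where
  "buchi_accepts B w \<longleftrightarrow> (\<exists>r :: nat \<Rightarrow> 'q. r 0 \<in> bu_init B
     \<and> (\<forall>k. (r k, w k, r (Suc k)) \<in> bu_trans B)
     \<and> (\<exists>\<^sub>\<infinity>k. r k \<in> bu_acc B))"

definition buchi_lang :: "('q, 'b) buchi \<Rightarrow> (nat \<Rightarrow> 'b) set" where
  "buchi_lang B = {w. buchi_accepts B w}"

text \<open>Transitions are elements of an abstract type 't, with source, letter and target.
  Counters are 0..ca_n. Transitions in ca_incr c increment counter c, those in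
  ca_reset c reset counter c.\<close>

record ('s, 'a, 't) cost_aut =
  ca_alph   :: "'a set"
  ca_states :: "'s set"
  ca_init   :: "'s set"
  ca_final  :: "'s set"
  ca_trans  :: "'t set"
  ca_src    :: "'t \<Rightarrow> 's"
  ca_lbl    :: "'t \<Rightarrow> 'a"
  ca_tgt    :: "'t \<Rightarrow> 's"
  ca_n      :: nat
  ca_incr   :: "nat \<Rightarrow> 't set"
  ca_reset  :: "nat \<Rightarrow> 't set"

definition cost_aut_wf :: "('s, 'a, 't) cost_aut \<Rightarrow> bool" where
  "cost_aut_wf A \<longleftrightarrow> finite (ca_alph A) \<and> finite (ca_states A)
     \<and> ca_init A \<subseteq> ca_states A \<and> ca_final A \<subseteq> ca_states A
     \<and> finite (ca_trans A)
     \<and> (\<forall>t \<in> ca_trans A. ca_src A t \<in> ca_states A \<and> ca_tgt A t \<in> ca_states A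
                          \<and> ca_lbl A t \<in> ca_alph A)
     \<and> (\<forall>c \<le> ca_n A. ca_incr A c \<subseteq> ca_trans A \<and> ca_reset A c \<subseteq> ca_trans A)
     \<and> (\<forall>c > ca_n A. ca_incr A c = {} \<and> ca_reset A c = {})
     \<and> (\<forall>c \<le> ca_n A. \<forall>t \<in> ca_incr A c \<union> ca_reset A c. \<forall>c' < c. t \<in> ca_reset A c')"

definition B_alph :: "('s, 'a, 't) cost_aut \<Rightarrow> 't set set" where
  "B_alph A = (\<Union>a \<in> ca_alph A. Pow {t \<in> ca_trans A. ca_lbl A t = a})"

text \<open>Infinite run in d 0, d 1, ... (0-indexed: the (j+1)-th transition lies in d j).\<close>
definition inf_run_in :: "('s, 'a, 't) cost_aut \<Rightarrow> (nat \<Rightarrow> 't set) \<Rightarrow> (nat \<Rightarrow> 't) \<Rightarrow> bool" where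
  "inf_run_in A d \<rho> \<longleftrightarrow> ca_src A (\<rho> 0) \<in> ca_init A
     \<and> (\<forall>j. \<rho> j \<in> d j)
     \<and> (\<forall>j. ca_tgt A (\<rho> j) = ca_src A (\<rho> (Suc j)))"

text \<open>Finite run in d 0 ... d (i-1), i.e. a list of i transitions, i \<ge> 1.\<close>
definition fin_run_in :: "('s, 'a, 't) cost_aut \<Rightarrow> (nat \<Rightarrow> 't set) \<Rightarrow> nat \<Rightarrow> 't list \<Rightarrow> bool" where
  "fin_run_in A d i ts \<longleftrightarrow> length ts = i \<and> ts \<noteq> []
     \<and> ca_src A (ts ! 0) \<in> ca_init A
     \<and> (\<forall>j < i. ts ! j \<in> d j)
     \<and> (\<forall>j. Suc j < i \<longrightarrow> ca_tgt A (ts ! j) = ca_src A (ts ! Suc j))"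

definition fin_run_accepting :: "('s, 'a, 't) cost_aut \<Rightarrow> 't list \<Rightarrow> bool" where
  "fin_run_accepting A ts \<longleftrightarrow> ca_tgt A (last ts) \<in> ca_final A"

text \<open>The interleaved infinite word a_1 d_1 a_2 d_2 ... (0-indexed sequences a, d).\<close>
definition interleave :: "(nat \<Rightarrow> 'a) \<Rightarrow> (nat \<Rightarrow> 'd) \<Rightarrow> nat \<Rightarrow> 'a + 'd" where
  "interleave a d k = (if even k then Inl (a (k div 2)) else Inr (d (k div 2)))"

definition game_alph :: "('s, 'a, 't) cost_aut \<Rightarrow> ('a + 't set) set" where
  "game_alph A = Inl ` ca_alph A \<union> Inr ` B_alph A"

definition win_inf :: "('s, 'a, 't) cost_aut \<Rightarrow> 'a list set \<Rightarrow> (nat \<Rightarrow> 'a + 't set) set" where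
  "win_inf A L = {interleave a d | a d.
      (\<forall>i. a i \<in> ca_alph A \<and> d i \<in> B_alph A)
    \<and> (\<forall>i. \<forall>t \<in> d i. ca_lbl A t = a i)
    \<and> (\<forall>\<rho>. inf_run_in A d \<rho> \<longrightarrow>
          (\<forall>c \<le> ca_n A. (\<exists>\<^sub>\<infinity>j. \<rho> j \<in> ca_incr A c) \<longrightarrow> (\<exists>\<^sub>\<infinity>j. \<rho> j \<in> ca_reset A c)))
    \<and> (\<forall>i \<ge> 1. map a [0..<i] \<in> L \<longrightarrow>
          (\<exists>ts. fin_run_in A d i ts \<and> fin_run_accepting A ts))}"

end

theory Submission
  imports Defs "HOL-Library.Ramsey" "HOL-Library.Infinite_Set"
begin


datatype 'x md = Pre | Bnd | Inb 'x

datatype ('a,'s) gs = G "'a option" "nat set" "'s set" "('s \<times> 's \<times> nat set \<times> nat set) set" "('s \<times> 's \<times> nat set \<times> nat set) set md"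

fun gol where "gol (G ol P Q \<tau> m) = ol"
fun gP where "gP (G ol P Q \<tau> m) = P"
fun gQ where "gQ (G ol P Q \<tau> m) = Q"
fun gT where "gT (G ol P Q \<tau> m) = \<tau>"
fun gmd where "gmd (G ol P Q \<tau> m) = m"

definition tcomp :: "('s \<times> 's \<times> nat set \<times> nat set) set \<Rightarrow> ('s \<times> 's \<times> nat set \<times> nat set) set \<Rightarrow> ('s \<times> 's \<times> nat set \<times> nat set) set" where
  "tcomp X Y = {(x, z, R1 \<union> R2, I1 \<union> I2) | x y z R1 R2 I1 I2. (x,y,R1,I1) \<in> X \<and> (y,z,R2,I2) \<in> Y}"
lemma tcomp_iff: "(x,z,R,I) \<in> tcomp X Y \<longleftrightarrow> (\<exists>y R1 R2 I1 I2. (x,y,R1,I1) \<in> X \<and> (y,z,R2,I2) \<in> Y \<and> R = R1 \<union> R2 \<and> I = I1 \<union> I2)"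
  unfolding tcomp_def by blast
lemma tcompI: "(x,y,R1,I1) \<in> X \<Longrightarrow> (y,z,R2,I2) \<in> Y \<Longrightarrow> (x,z,R1 \<union> R2,I1 \<union> I2) \<in> tcomp X Y"
  unfolding tcomp_def by blast
lemma tcompE: assumes "e \<in> tcomp X Y"
  obtains x y z R1 R2 I1 I2 where "(x,y,R1,I1) \<in> X" "(y,z,R2,I2) \<in> Y" "e = (x,z,R1 \<union> R2,I1 \<union> I2)"
  using assms unfolding tcomp_def by blast
lemma tcomp_assoc: "tcomp (tcomp X Y) Z = tcomp X (tcomp Y Z)"
proof (intro equalityI subsetI)
  fix e assume "e \<in> tcomp (tcomp X Y) Z"
  then obtain x y z R1 R2 I1 I2 where h1: "(x,y,R1,I1) \<in> tcomp X Y" "(y,z,R2,I2) \<in> Z" "e = (x,z,R1 \<union> R2,I1 \<union> I2)"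
    by (rule tcompE)
  from h1(1) obtain x' u y' Ra Rb Ia Ib where h2: "(x',u,Ra,Ia) \<in> X" "(u,y',Rb,Ib) \<in> Y" "(x,y,R1,I1) = (x',y',Ra \<union> Rb,Ia \<union> Ib)"
    by (rule tcompE)
  have "(u,z,Rb \<union> R2,Ib \<union> I2) \<in> tcomp Y Z" using h1 h2 by (auto intro: tcompI)
  then have "(x,z,Ra \<union> (Rb \<union> R2),Ia \<union> (Ib \<union> I2)) \<in> tcomp X (tcomp Y Z)" using h2 by (auto intro: tcompI)
  then show "e \<in> tcomp X (tcomp Y Z)" using h1 h2 by (simp add: Un_assoc)
next
  fix e assume "e \<in> tcomp X (tcomp Y Z)"
  then obtain x y z R1 R2 I1 I2 where h1: "(x,y,R1,I1) \<in> X" "(y,z,R2,I2) \<in> tcomp Y Z" "e = (x,z,R1 \<union> R2,I1 \<union> I2)"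
    by (rule tcompE)
  from h1(2) obtain y' u z' Ra Rb Ia Ib where h2: "(y',u,Ra,Ia) \<in> Y" "(u,z',Rb,Ib) \<in> Z" "(y,z,R2,I2) = (y',z',Ra \<union> Rb,Ia \<union> Ib)"
    by (rule tcompE)
  have "(x,u,R1 \<union> Ra,I1 \<union> Ia) \<in> tcomp X Y" using h1 h2 by (auto intro: tcompI)
  then have "(x,z,(R1 \<union> Ra) \<union> Rb,(I1 \<union> Ia) \<union> Ib) \<in> tcomp (tcomp X Y) Z" using h2 by (auto intro: tcompI)
  then show "e \<in> tcomp (tcomp X Y) Z" using h1 h2 by (simp add: Un_assoc)
qed

lemma tcomp_Un_left: "tcomp (X \<union> Y) Z = tcomp X Z \<union> tcomp Y Z"
proof (intro equalityI subsetI)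
  fix e assume "e \<in> tcomp (X \<union> Y) Z"
  then show "e \<in> tcomp X Z \<union> tcomp Y Z" by (elim tcompE) (auto intro: tcompI)
next
  fix e assume "e \<in> tcomp X Z \<union> tcomp Y Z"
  then show "e \<in> tcomp (X \<union> Y) Z" by (auto elim!: tcompE intro: tcompI)
qed

lemma tcomp_mono: "X \<subseteq> X' \<Longrightarrow> Y \<subseteq> Y' \<Longrightarrow> tcomp X Y \<subseteq> tcomp X' Y'"
  by (auto elim!: tcompE intro!: tcompI)

definition bad :: "('s \<times> 's \<times> nat set \<times> nat set) set \<Rightarrow> 's set" where
  "bad \<tau> = {s. \<exists>R I c. (s,s,R,I) \<in> \<tau> \<and> c \<in> I \<and> c \<notin> R}"

definition npost :: "(nat,'a) nfa \<Rightarrow> nat set \<Rightarrow> 'a \<Rightarrow> nat set" where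
  "npost N P x = {q'. \<exists>q\<in>P. (q,x,q') \<in> nfa_trans N}"

fun Ps :: "(nat,'a) nfa \<Rightarrow> (nat \<Rightarrow> 'a) \<Rightarrow> nat \<Rightarrow> nat set" where
  "Ps N a 0 = nfa_init N"
| "Ps N a (Suc m) = npost N (Ps N a m) (a m)"

lemma Ps_iff: "q \<in> Ps N a m \<longleftrightarrow> (\<exists>r. r 0 \<in> nfa_init N \<and> (\<forall>k<m. (r k, a k, r (Suc k)) \<in> nfa_trans N) \<and> r m = q)"
proof (induction m arbitrary: q)
  case 0
  then show ?case by auto
next
  case (Suc m)
  show ?case
  proof
    assume "q \<in> Ps N a (Suc m)"
    then obtain q0 where q0: "q0 \<in> Ps N a m" "(q0, a m, q) \<in> nfa_trans N" by (auto simp: npost_def)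
    then obtain r where r: "r 0 \<in> nfa_init N" "\<forall>k<m. (r k, a k, r (Suc k)) \<in> nfa_trans N" "r m = q0"
      using Suc by blast
    let ?r = "r(Suc m := q)"
    have "?r 0 \<in> nfa_init N" using r by simp
    moreover have "\<forall>k<Suc m. (?r k, a k, ?r (Suc k)) \<in> nfa_trans N"
      using r q0 by (auto simp: less_Suc_eq)
    ultimately show "\<exists>r. r 0 \<in> nfa_init N \<and> (\<forall>k<Suc m. (r k, a k, r (Suc k)) \<in> nfa_trans N) \<and> r (Suc m) = q"
      by (intro exI[of _ ?r]) simp
  next
    assume "\<exists>r. r 0 \<in> nfa_init N \<and> (\<forall>k<Suc m. (r k, a k, r (Suc k)) \<in> nfa_trans N) \<and> r (Suc m) = q"
    then obtain r where r: "r 0 \<in> nfa_init N" "\<forall>k<Suc m. (r k, a k, r (Suc k)) \<in> nfa_trans N" "r (Suc m) = q"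
      by blast
    then have "r m \<in> Ps N a m" using Suc by auto
    then show "q \<in> Ps N a (Suc m)" using r by (auto simp: npost_def)
  qed
qed

lemma Ps_acc: "nfa_accepts N (map a [0..<m]) \<longleftrightarrow> Ps N a m \<inter> nfa_final N \<noteq> {}"
proof -
  have "nfa_accepts N (map a [0..<m]) \<longleftrightarrow> (\<exists>r. r 0 \<in> nfa_init N \<and> (\<forall>k<m. (r k, a k, r (Suc k)) \<in> nfa_trans N) \<and> r m \<in> nfa_final N)"
    unfolding nfa_accepts_def by auto
  also have "\<dots> \<longleftrightarrow> (\<exists>q. q \<in> Ps N a m \<and> q \<in> nfa_final N)"
    unfolding Ps_iff by blast
  also have "\<dots> \<longleftrightarrow> Ps N a m \<inter> nfa_final N \<noteq> {}" by blast
  finally show ?thesis .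
qed

lemma Ps_sub: "nfa_wf S N \<Longrightarrow> Ps N a m \<subseteq> nfa_states N"
  by (induction m) (auto simp: nfa_wf_def npost_def)

lemma ex_Suc: "i \<le> j \<Longrightarrow> (\<exists>m. i \<le> m \<and> m < Suc j \<and> P m) \<longleftrightarrow> (\<exists>m. i \<le> m \<and> m < j \<and> P m) \<or> P j"
  by (metis less_Suc_eq)

lemma ex_upd: "(\<exists>m::nat. i \<le> m \<and> m < j \<and> P ((p(j:=t)) m)) \<longleftrightarrow> (\<exists>m. i \<le> m \<and> m < j \<and> P (p m))"
proof
  assume "\<exists>m::nat. i \<le> m \<and> m < j \<and> P ((p(j:=t)) m)"
  then obtain m where "i \<le> m" "m < j" "P ((p(j:=t)) m)" by blast
  then show "\<exists>m. i \<le> m \<and> m < j \<and> P (p m)" by (intro exI[of _ m]) simp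
next
  assume "\<exists>m::nat. i \<le> m \<and> m < j \<and> P (p m)"
  then obtain m where "i \<le> m" "m < j" "P (p m)" by blast
  then show "\<exists>m. i \<le> m \<and> m < j \<and> P ((p(j:=t)) m)" by (intro exI[of _ m]) simp
qed

context fixes A :: "('s,'a,'t) cost_aut"
begin

definition fpath :: "(nat \<Rightarrow> 't set) \<Rightarrow> nat \<Rightarrow> nat \<Rightarrow> (nat \<Rightarrow> 't) \<Rightarrow> bool" where
  "fpath d i j p \<longleftrightarrow> (\<forall>m. i \<le> m \<and> m < j \<longrightarrow> p m \<in> d m)
     \<and> (\<forall>m. i \<le> m \<and> Suc m < j \<longrightarrow> ca_tgt A (p m) = ca_src A (p (Suc m)))"

definition rsets :: "(nat \<Rightarrow> 't) \<Rightarrow> nat \<Rightarrow> nat \<Rightarrow> nat set" where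
  "rsets p i j = {c. \<exists>m. i \<le> m \<and> m < j \<and> p m \<in> ca_reset A c}"
definition isets :: "(nat \<Rightarrow> 't) \<Rightarrow> nat \<Rightarrow> nat \<Rightarrow> nat set" where
  "isets p i j = {c. \<exists>m. i \<le> m \<and> m < j \<and> p m \<in> ca_incr A c}"

lemma rsets_Suc: "i \<le> j \<Longrightarrow> rsets p i (Suc j) = rsets p i j \<union> {c. p j \<in> ca_reset A c}"
  unfolding rsets_def by (simp add: ex_Suc Collect_disj_eq)
lemma isets_Suc: "i \<le> j \<Longrightarrow> isets p i (Suc j) = isets p i j \<union> {c. p j \<in> ca_incr A c}"
  unfolding isets_def by (simp add: ex_Suc Collect_disj_eq)
lemma rsets_upd: "rsets (p(j:=t)) i j = rsets p i j"
  unfolding rsets_def by (rule Collect_cong) (rule ex_upd)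
lemma isets_upd: "isets (p(j:=t)) i j = isets p i j"
  unfolding isets_def by (rule Collect_cong) (rule ex_upd)

definition ptyp :: "(nat \<Rightarrow> 't set) \<Rightarrow> nat \<Rightarrow> nat \<Rightarrow> ('s \<times> 's \<times> nat set \<times> nat set) set" where
  "ptyp d i j = {(ca_src A (p i), ca_tgt A (p (j - 1)), rsets p i j, isets p i j) | p. i < j \<and> fpath d i j p}"

definition stp :: "'t set \<Rightarrow> ('s \<times> 's \<times> nat set \<times> nat set) set" where
  "stp D = {(ca_src A t, ca_tgt A t, {c. t \<in> ca_reset A c}, {c. t \<in> ca_incr A c}) | t. t \<in> D}"

lemma ptypI: "i < j \<Longrightarrow> fpath d i j p \<Longrightarrow> (ca_src A (p i), ca_tgt A (p (j - 1)), rsets p i j, isets p i j) \<in> ptyp d i j"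
  unfolding ptyp_def by blast
lemma ptypE: assumes "e \<in> ptyp d i j"
  obtains p where "i < j" "fpath d i j p" "e = (ca_src A (p i), ca_tgt A (p (j - 1)), rsets p i j, isets p i j)"
  using assms unfolding ptyp_def by blast
lemma stpI: "t \<in> D \<Longrightarrow> (ca_src A t, ca_tgt A t, {c. t \<in> ca_reset A c}, {c. t \<in> ca_incr A c}) \<in> stp D"
  unfolding stp_def by blast
lemma stpE: assumes "e \<in> stp D"
  obtains t where "t \<in> D" "e = (ca_src A t, ca_tgt A t, {c. t \<in> ca_reset A c}, {c. t \<in> ca_incr A c})"
  using assms unfolding stp_def by blast

definition post :: "'s set \<Rightarrow> 't set \<Rightarrow> 's set" where
  "post Q D = {ca_tgt A t | t. t \<in> D \<and> ca_src A t \<in> Q}"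

fun Rch :: "(nat \<Rightarrow> 't set) \<Rightarrow> nat \<Rightarrow> 's set" where
  "Rch d 0 = ca_init A"
| "Rch d (Suc m) = post (Rch d m) (d m)"

lemma ptyp_self: "ptyp d j (Suc j) = stp (d j)"
proof
  show "ptyp d j (Suc j) \<subseteq> stp (d j)"
  proof
    fix e assume "e \<in> ptyp d j (Suc j)"
    then obtain p where p: "fpath d j (Suc j) p" "e = (ca_src A (p j), ca_tgt A (p j), rsets p j (Suc j), isets p j (Suc j))"
      by (elim ptypE) simp
    have "p j \<in> d j" using p unfolding fpath_def by simp
    moreover have "rsets p j (Suc j) = {c. p j \<in> ca_reset A c}" "isets p j (Suc j) = {c. p j \<in> ca_incr A c}"
      by (simp_all only: rsets_Suc[of j j] isets_Suc[of j j] order_refl) (auto simp: rsets_def isets_def)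
    ultimately show "e \<in> stp (d j)" using p stpI by simp
  qed
next
  show "stp (d j) \<subseteq> ptyp d j (Suc j)"
  proof
    fix e assume "e \<in> stp (d j)"
    then obtain t where t: "t \<in> d j" "e = (ca_src A t, ca_tgt A t, {c. t \<in> ca_reset A c}, {c. t \<in> ca_incr A c})"
      by (rule stpE)
    let ?p = "\<lambda>_. t"
    have "fpath d j (Suc j) ?p" using t by (auto simp: fpath_def le_less_Suc_eq)
    moreover have "rsets ?p j (Suc j) = {c. t \<in> ca_reset A c}" "isets ?p j (Suc j) = {c. t \<in> ca_incr A c}"
      by (auto simp: rsets_def isets_def)
    ultimately show "e \<in> ptyp d j (Suc j)" using t ptypI[of j "Suc j" d ?p] by simp
  qed
qed

lemma ptyp_Suc: assumes "i < j" shows "ptyp d i (Suc j) = tcomp (ptyp d i j) (stp (d j))"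
proof
  show "ptyp d i (Suc j) \<subseteq> tcomp (ptyp d i j) (stp (d j))"
  proof
    fix e assume "e \<in> ptyp d i (Suc j)"
    then obtain p where p: "fpath d i (Suc j) p" and e: "e = (ca_src A (p i), ca_tgt A (p j), rsets p i (Suc j), isets p i (Suc j))"
      by (elim ptypE) simp
    have fp: "fpath d i j p" using p by (auto simp: fpath_def)
    have e1: "(ca_src A (p i), ca_tgt A (p (j - 1)), rsets p i j, isets p i j) \<in> ptyp d i j"
      by (rule ptypI[OF assms fp])
    have pj: "p j \<in> d j" using p assms unfolding fpath_def by simp
    have e2: "(ca_src A (p j), ca_tgt A (p j), {c. p j \<in> ca_reset A c}, {c. p j \<in> ca_incr A c}) \<in> stp (d j)"
      using pj by (rule stpI)
    have sj: "Suc (j - 1) = j" using assms by simp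
    have "ca_tgt A (p (j - 1)) = ca_src A (p (Suc (j - 1)))"
      using p assms unfolding fpath_def by simp
    then have con: "ca_tgt A (p (j - 1)) = ca_src A (p j)" using sj by simp
    have "rsets p i (Suc j) = rsets p i j \<union> {c. p j \<in> ca_reset A c}"
      using assms by (simp add: rsets_Suc)
    moreover have "isets p i (Suc j) = isets p i j \<union> {c. p j \<in> ca_incr A c}"
      using assms by (simp add: isets_Suc)
    ultimately show "e \<in> tcomp (ptyp d i j) (stp (d j))"
      using tcompI[OF e1 e2[folded con]] e by simp
  qed
next
  show "tcomp (ptyp d i j) (stp (d j)) \<subseteq> ptyp d i (Suc j)"
  proof
    fix e assume "e \<in> tcomp (ptyp d i j) (stp (d j))"
    then obtain x y z R1 R2 I1 I2 where h: "(x,y,R1,I1) \<in> ptyp d i j" "(y,z,R2,I2) \<in> stp (d j)" "e = (x,z,R1 \<union> R2,I1 \<union> I2)"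
      by (rule tcompE)
    from h(1) obtain p where p: "fpath d i j p" "x = ca_src A (p i)" "y = ca_tgt A (p (j - 1))" "R1 = rsets p i j" "I1 = isets p i j"
      by (elim ptypE) simp
    from h(2) obtain t where t: "t \<in> d j" "y = ca_src A t" "z = ca_tgt A t" "R2 = {c. t \<in> ca_reset A c}" "I2 = {c. t \<in> ca_incr A c}"
      by (elim stpE) simp
    let ?p = "p(j := t)"
    have "fpath d i (Suc j) ?p"
      unfolding fpath_def
    proof (intro conjI allI impI)
      fix m assume "i \<le> m \<and> m < Suc j"
      then show "?p m \<in> d m" using p t unfolding fpath_def by (cases "m = j") auto
    next
      fix m assume m: "i \<le> m \<and> Suc m < Suc j"
      show "ca_tgt A (?p m) = ca_src A (?p (Suc m))"
      proof (cases "Suc m = j")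
        case True
        then have "m = j - 1" by simp
        then show ?thesis using True p t by simp
      next
        case False
        then have "Suc m < j" using m by simp
        then show ?thesis using p m unfolding fpath_def by simp
      qed
    qed
    moreover have "rsets ?p i (Suc j) = rsets p i j \<union> {c. t \<in> ca_reset A c}"
      using assms by (simp add: rsets_Suc rsets_upd)
    moreover have "isets ?p i (Suc j) = isets p i j \<union> {c. t \<in> ca_incr A c}"
      using assms by (simp add: isets_Suc isets_upd)
    moreover have "?p i = p i" using assms by simp
    moreover have "?p (Suc j - 1) = t" by simp
    ultimately have "(ca_src A (p i), ca_tgt A t, rsets p i j \<union> {c. t \<in> ca_reset A c}, isets p i j \<union> {c. t \<in> ca_incr A c}) \<in> ptyp d i (Suc j)"
      using ptypI[of i "Suc j" d ?p] assms by simp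
    then show "e \<in> ptyp d i (Suc j)" using h p t by simp
  qed
qed

lemma ptyp_split: assumes "i < j" "j < k" shows "ptyp d i k = tcomp (ptyp d i j) (ptyp d j k)"
  using assms(2)
proof (induction k rule: less_induct)
  case (less k)
  then obtain k' where k: "k = Suc k'" "j \<le> k'" by (cases k) auto
  show ?case
  proof (cases "j = k'")
    case True
    have "ptyp d i k = tcomp (ptyp d i j) (stp (d j))" using k True ptyp_Suc[OF assms(1)] by simp
    also have "stp (d j) = ptyp d j k" using k True ptyp_self by simp
    finally show ?thesis .
  next
    case False
    then have jk: "j < k'" using k by simp
    have ik: "i < k'" using jk assms by simp
    have "ptyp d i k = tcomp (ptyp d i k') (stp (d k'))" using k ptyp_Suc[OF ik] by simp
    also have "ptyp d i k' = tcomp (ptyp d i j) (ptyp d j k')" using less jk k by simp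
    also have "tcomp (tcomp (ptyp d i j) (ptyp d j k')) (stp (d k')) = tcomp (ptyp d i j) (tcomp (ptyp d j k') (stp (d k')))"
      by (rule tcomp_assoc)
    also have "tcomp (ptyp d j k') (stp (d k')) = ptyp d j k" using k ptyp_Suc[OF jk] by simp
    finally show ?thesis .
  qed
qed


lemma inf_run_fpath: "inf_run_in A d \<rho> \<Longrightarrow> fpath d i j \<rho>"
  unfolding inf_run_in_def fpath_def by simp

lemma Rch_run: "inf_run_in A d \<rho> \<Longrightarrow> ca_tgt A (\<rho> m) \<in> Rch d (Suc m)"
proof (induction m)
  case 0
  then have "\<rho> 0 \<in> d 0" "ca_src A (\<rho> 0) \<in> ca_init A" unfolding inf_run_in_def by simp_all
  then have "ca_tgt A (\<rho> 0) \<in> post (ca_init A) (d 0)" unfolding post_def by blast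
  then show ?case by simp
next
  case (Suc m)
  then have "ca_src A (\<rho> (Suc m)) \<in> Rch d (Suc m)" unfolding inf_run_in_def by metis
  moreover have "\<rho> (Suc m) \<in> d (Suc m)" using Suc.prems unfolding inf_run_in_def by simp
  ultimately show ?case by (auto simp: post_def)
qed

lemma Rch_path: "s \<in> Rch d (Suc m) \<Longrightarrow> \<exists>p. fpath d 0 (Suc m) p \<and> ca_src A (p 0) \<in> ca_init A \<and> ca_tgt A (p m) = s"
proof (induction m arbitrary: s)
  case 0
  then obtain t where t: "t \<in> d 0" "ca_src A t \<in> ca_init A" "s = ca_tgt A t" by (auto simp: post_def)
  show ?case using t by (intro exI[of _ "\<lambda>_. t"]) (auto simp: fpath_def)
next
  case (Suc m)
  then obtain t where t: "t \<in> d (Suc m)" "ca_src A t \<in> Rch d (Suc m)" "s = ca_tgt A t"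
    by (auto simp: post_def)
  then obtain p where p: "fpath d 0 (Suc m) p" "ca_src A (p 0) \<in> ca_init A" "ca_tgt A (p m) = ca_src A t"
    using Suc.IH by blast
  let ?p = "p(Suc m := t)"
  have fp: "fpath d 0 (Suc (Suc m)) ?p"
    unfolding fpath_def
  proof (intro conjI allI impI)
    fix k assume "0 \<le> k \<and> k < Suc (Suc m)"
    then show "?p k \<in> d k" using p t unfolding fpath_def by (cases "k = Suc m") auto
  next
    fix k assume k: "0 \<le> k \<and> Suc k < Suc (Suc m)"
    show "ca_tgt A (?p k) = ca_src A (?p (Suc k))"
    proof (cases "k = m")
      case True
      then show ?thesis using p t by simp
    next
      case False
      then have "Suc k < Suc m" using k by simp
      then show ?thesis using p k unfolding fpath_def by simp
    qed
  qed
  have "?p 0 = p 0" "?p (Suc m) = t" by simp_all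
  then show ?case using fp p t by metis
qed

lemma path_Rch: "fpath d 0 (Suc m) p \<Longrightarrow> ca_src A (p 0) \<in> ca_init A \<Longrightarrow> ca_tgt A (p m) \<in> Rch d (Suc m)"
proof (induction m)
  case 0
  then show ?case unfolding fpath_def by (auto simp: post_def)
next
  case (Suc m)
  then have "fpath d 0 (Suc m) p" unfolding fpath_def by simp
  then have "ca_tgt A (p m) \<in> Rch d (Suc m)" using Suc by simp
  moreover have "ca_tgt A (p m) = ca_src A (p (Suc m))" "p (Suc m) \<in> d (Suc m)"
    using Suc.prems unfolding fpath_def by simp_all
  ultimately show ?case by (auto simp: post_def)
qed

lemma finrun_Rch: "(\<exists>ts. fin_run_in A d (Suc m) ts \<and> fin_run_accepting A ts) \<longleftrightarrow> Rch d (Suc m) \<inter> ca_final A \<noteq> {}"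
proof
  assume "\<exists>ts. fin_run_in A d (Suc m) ts \<and> fin_run_accepting A ts"
  then obtain ts where ts: "fin_run_in A d (Suc m) ts" "fin_run_accepting A ts" by blast
  let ?p = "\<lambda>k. ts ! k"
  have "fpath d 0 (Suc m) ?p" using ts unfolding fin_run_in_def fpath_def by simp
  moreover have "ca_src A (?p 0) \<in> ca_init A" using ts unfolding fin_run_in_def by simp
  ultimately have "ca_tgt A (?p m) \<in> Rch d (Suc m)" by (rule path_Rch)
  moreover have "last ts = ts ! m" using ts unfolding fin_run_in_def by (simp add: last_conv_nth)
  ultimately show "Rch d (Suc m) \<inter> ca_final A \<noteq> {}" using ts unfolding fin_run_accepting_def by auto
next
  assume "Rch d (Suc m) \<inter> ca_final A \<noteq> {}"
  then obtain s where s: "s \<in> Rch d (Suc m)" "s \<in> ca_final A" by blast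
  then obtain p where p: "fpath d 0 (Suc m) p" "ca_src A (p 0) \<in> ca_init A" "ca_tgt A (p m) = s"
    using Rch_path by blast
  let ?ts = "map p [0..<Suc m]"
  have "fin_run_in A d (Suc m) ?ts"
    unfolding fin_run_in_def using p unfolding fpath_def
    by (simp del: upt_Suc add: nth_map_upt)
  moreover have "fin_run_accepting A ?ts"
    unfolding fin_run_accepting_def using p s by (simp del: upt_Suc add: last_map)
  ultimately show "\<exists>ts. fin_run_in A d (Suc m) ts \<and> fin_run_accepting A ts" by blast
qed


lemma glue:
  assumes Hinf: "infinite H" and bH: "b \<in> H" and b1: "0 < b"
    and hom: "\<forall>x\<in>H. \<forall>y\<in>H. x < y \<longrightarrow> ptyp d x y = \<tau>"
    and sR: "s \<in> Rch d b" and loop: "(s,s,R,I) \<in> \<tau>"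
  shows "\<exists>\<rho>. inf_run_in A d \<rho> \<and> (\<forall>c\<in>I. \<exists>\<^sub>\<infinity>j. \<rho> j \<in> ca_incr A c)
            \<and> (\<forall>c. c \<notin> R \<longrightarrow> (\<forall>j\<ge>b. \<rho> j \<notin> ca_reset A c))"
proof -
  have unb: "\<And>m. \<exists>n>m. n \<in> H" using Hinf infinite_nat_iff_unbounded by blast
  define nx where "nx h = (LEAST h'. h' \<in> H \<and> h < h')" for h
  have nx: "nx h \<in> H \<and> h < nx h" for h
  proof -
    obtain h' where "h < h'" "h' \<in> H" using unb by blast
    then show ?thesis unfolding nx_def by (metis (mono_tags, lifting) LeastI)
  qed
  have nx_le: "nx h \<le> h'" if "h' \<in> H" "h < h'" for h h'
    unfolding nx_def using that by (simp add: Least_le)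
  define pv where "pv m = Max {h \<in> H. b \<le> h \<and> h \<le> m}" for m
  have pvS: "pv m \<in> H \<and> b \<le> pv m \<and> pv m \<le> m \<and> (\<forall>h\<in>H. b \<le> h \<and> h \<le> m \<longrightarrow> h \<le> pv m)" if "b \<le> m" for m
  proof -
    have fin: "finite {h \<in> H. b \<le> h \<and> h \<le> m}" by (rule finite_subset[of _ "{..m}"]) auto
    have ne: "{h \<in> H. b \<le> h \<and> h \<le> m} \<noteq> {}" using bH that by blast
    show ?thesis using Max_in[OF fin ne] Max_ge[OF fin] unfolding pv_def by blast
  qed
  have pv: "pv m \<in> H \<and> b \<le> pv m \<and> pv m \<le> m \<and> m < nx (pv m)" if "b \<le> m" for m
  proof -
    have "m < nx (pv m)"
    proof (rule ccontr)
      assume "\<not> m < nx (pv m)"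
      then have "nx (pv m) \<le> m" by simp
      moreover have "b \<le> nx (pv m)" using pvS[OF that] nx[of "pv m"] by simp
      ultimately have "nx (pv m) \<le> pv m" using pvS[OF that] nx[of "pv m"] by blast
      then show False using nx[of "pv m"] by simp
    qed
    then show ?thesis using pvS[OF that] by blast
  qed
  have pv_eq: "pv m = h" if "h \<in> H" "b \<le> h" "h \<le> m" "m < nx h" for h m
  proof -
    have bm: "b \<le> m" using that by simp
    have "h \<le> pv m" using pvS[OF bm] that by blast
    moreover have "\<not> h < pv m"
    proof
      assume "h < pv m"
      then have "nx h \<le> pv m" using nx_le pvS[OF bm] by blast
      then show False using pvS[OF bm] that by simp
    qed
    ultimately show ?thesis by simp
  qed
  have "\<forall>h\<in>H. \<exists>q. fpath d h (nx h) q \<and> ca_src A (q h) = s \<and> ca_tgt A (q (nx h - 1)) = s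
           \<and> rsets q h (nx h) = R \<and> isets q h (nx h) = I"
  proof
    fix h assume "h \<in> H"
    then have "ptyp d h (nx h) = \<tau>" using hom nx by blast
    then have "(s,s,R,I) \<in> ptyp d h (nx h)" using loop by simp
    then show "\<exists>q. fpath d h (nx h) q \<and> ca_src A (q h) = s \<and> ca_tgt A (q (nx h - 1)) = s
           \<and> rsets q h (nx h) = R \<and> isets q h (nx h) = I"
      by (elim ptypE) auto
  qed
  then obtain q where q: "\<And>h. h \<in> H \<Longrightarrow> fpath d h (nx h) (q h) \<and> ca_src A (q h h) = s \<and> ca_tgt A (q h (nx h - 1)) = s
           \<and> rsets (q h) h (nx h) = R \<and> isets (q h) h (nx h) = I"
    using bchoice by metis
  obtain b' where b': "b = Suc b'" using b1 by (cases b) auto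
  obtain p0 where p0: "fpath d 0 b p0" "ca_src A (p0 0) \<in> ca_init A" "ca_tgt A (p0 b') = s"
    using Rch_path[of s d b'] sR b' by blast
  define \<rho> where "\<rho> m = (if m < b then p0 m else q (pv m) m)" for m
  have run: "inf_run_in A d \<rho>"
    unfolding inf_run_in_def
  proof (intro conjI allI)
    show "ca_src A (\<rho> 0) \<in> ca_init A" using p0 b1 unfolding \<rho>_def by simp
  next
    fix j
    show "\<rho> j \<in> d j"
    proof (cases "j < b")
      case True
      then show ?thesis using p0 unfolding \<rho>_def fpath_def by simp
    next
      case False
      then have "b \<le> j" by simp
      then show ?thesis using pv[of j] q[of "pv j"] unfolding \<rho>_def fpath_def by simp
    qed
  next
    fix j
    show "ca_tgt A (\<rho> j) = ca_src A (\<rho> (Suc j))"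
    proof (cases "Suc j < b")
      case True
      then show ?thesis using p0 unfolding \<rho>_def fpath_def by simp
    next
      case False
      show ?thesis
      proof (cases "Suc j = b")
        case True
        then have "j = b'" using b' by simp
        moreover have "pv b = b" using pv_eq[of b b] bH nx[of b] by simp
        ultimately show ?thesis using True p0 q[OF bH] unfolding \<rho>_def by simp
      next
        case False
        then have bj: "b \<le> j" using \<open>\<not> Suc j < b\<close> by simp
        let ?h = "pv j"
        have h: "?h \<in> H" "b \<le> ?h" "?h \<le> j" "j < nx ?h" using pv[OF bj] by auto
        show ?thesis
        proof (cases "Suc j < nx ?h")
          case True
          then have "pv (Suc j) = ?h" using pv_eq[of ?h "Suc j"] h by simp
          then show ?thesis using q[OF h(1)] h True bj unfolding \<rho>_def fpath_def by simp
        next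
          case False
          then have sj: "Suc j = nx ?h" using h by simp
          have "nx ?h \<in> H" using nx by blast
          then have "pv (Suc j) = nx ?h" using pv_eq[of "nx ?h" "Suc j"] sj h nx[of "nx ?h"] by simp
          moreover have "j = nx ?h - 1" using sj by simp
          ultimately show ?thesis using q[OF h(1)] q[OF \<open>nx ?h \<in> H\<close>] bj sj unfolding \<rho>_def by simp
        qed
      qed
    qed
  qed
  have inc: "\<exists>\<^sub>\<infinity>j. \<rho> j \<in> ca_incr A c" if "c \<in> I" for c
    unfolding INFM_nat
  proof
    fix M
    obtain h where h: "h \<in> H" "M + b < h" using unb by blast
    then have "c \<in> isets (q h) h (nx h)" using q that by simp
    then obtain n where n: "h \<le> n" "n < nx h" "q h n \<in> ca_incr A c" unfolding isets_def by blast
    have "pv n = h" using pv_eq[of h n] h n by simp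
    then have "\<rho> n = q h n" using h n unfolding \<rho>_def by simp
    then show "\<exists>n>M. \<rho> n \<in> ca_incr A c" using n h by (intro exI[of _ n]) simp
  qed
  have res: "\<rho> j \<notin> ca_reset A c" if "c \<notin> R" "b \<le> j" for c j
  proof
    assume a: "\<rho> j \<in> ca_reset A c"
    let ?h = "pv j"
    have h: "?h \<in> H" "b \<le> ?h" "?h \<le> j" "j < nx ?h" using pv[OF that(2)] by auto
    have "\<rho> j = q ?h j" using that unfolding \<rho>_def by simp
    then have "c \<in> rsets (q ?h) ?h (nx ?h)" using a h unfolding rsets_def by auto
    then show False using q[OF h(1)] that by simp
  qed
  show ?thesis using run inc res by blast
qed

end



fun mstep :: "('s \<times> 's \<times> nat set \<times> nat set) set \<Rightarrow> 's set \<Rightarrow> ('s \<times> 's \<times> nat set \<times> nat set) set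
   \<Rightarrow> ('s \<times> 's \<times> nat set \<times> nat set) set md \<Rightarrow> ('s \<times> 's \<times> nat set \<times> nat set) set md \<Rightarrow> bool" where
  "mstep \<tau> Q S Pre m' = (m' = Pre \<or> (m' = Bnd \<and> Q \<inter> bad \<tau> = {}))"
| "mstep \<tau> Q S Bnd m' = (m' = Inb S \<or> (S = \<tau> \<and> m' = Bnd \<and> Q \<inter> bad \<tau> = {}))"
| "mstep \<tau> Q S (Inb X) m' = (m' = Inb (tcomp X S) \<or> (tcomp X S = \<tau> \<and> m' = Bnd \<and> Q \<inter> bad \<tau> = {}))"

lemma mstep_Bnd: "mstep \<tau> Q S m Bnd \<Longrightarrow> Q \<inter> bad \<tau> = {}"
  by (cases m) auto

lemma mstep_nPre: "mstep \<tau> Q S m m' \<Longrightarrow> m \<noteq> Pre \<Longrightarrow> m' \<noteq> Pre"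
  by (cases m) auto

fun gstep :: "('s,'a,'t) cost_aut \<Rightarrow> (nat,'a) nfa \<Rightarrow> ('a,'s) gs \<Rightarrow> 'a + 't set \<Rightarrow> ('a,'s) gs \<Rightarrow> bool" where
  "gstep A N (G ol P Q \<tau> m) (Inl x) (G ol' P' Q' \<tau>' m') =
     (ol = None \<and> ol' = Some x \<and> P' = npost N P x \<and> Q' = Q \<and> \<tau>' = \<tau> \<and> m' = m)"
| "gstep A N (G ol P Q \<tau> m) (Inr D) (G ol' P' Q' \<tau>' m') =
     ((\<exists>x. ol = Some x \<and> (\<forall>t\<in>D. ca_lbl A t = x)) \<and> ol' = None \<and> P' = P \<and> Q' = post A Q D \<and> \<tau>' = \<tau>
      \<and> (P \<inter> nfa_final N \<noteq> {} \<longrightarrow> Q' \<inter> ca_final A \<noteq> {}) \<and> mstep \<tau> Q' (stp A D) m m')"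

lemma gstep_Inl: "gstep A N q (Inl x) q' \<longleftrightarrow> gol q = None \<and> gol q' = Some x \<and> gP q' = npost N (gP q) x
   \<and> gQ q' = gQ q \<and> gT q' = gT q \<and> gmd q' = gmd q"
  by (cases q; cases q') simp

lemma gstep_Inr: "gstep A N q (Inr D) q' \<longleftrightarrow> (\<exists>x. gol q = Some x \<and> (\<forall>t\<in>D. ca_lbl A t = x)) \<and> gol q' = None
   \<and> gP q' = gP q \<and> gQ q' = post A (gQ q) D \<and> gT q' = gT q
   \<and> (gP q \<inter> nfa_final N \<noteq> {} \<longrightarrow> gQ q' \<inter> ca_final A \<noteq> {}) \<and> mstep (gT q) (gQ q') (stp A D) (gmd q) (gmd q')"
  by (cases q; cases q') simp

definition Ty :: "('s,'a,'t) cost_aut \<Rightarrow> ('s \<times> 's \<times> nat set \<times> nat set) set" where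
  "Ty A = ca_states A \<times> ca_states A \<times> Pow {..ca_n A} \<times> Pow {..ca_n A}"

definition St :: "('s,'a,'t) cost_aut \<Rightarrow> (nat,'a) nfa \<Rightarrow> ('a,'s) gs set" where
  "St A N = (\<lambda>(ol,P,Q,\<tau>,m). G ol P Q \<tau> m) ` (insert None (Some ` ca_alph A) \<times> Pow (nfa_states N) \<times> Pow (ca_states A)
      \<times> Pow (Ty A) \<times> insert Pre (insert Bnd (Inb ` Pow (Ty A))))"

lemma St_iff: "G ol P Q \<tau> m \<in> St A N \<longleftrightarrow> ol \<in> insert None (Some ` ca_alph A) \<and> P \<subseteq> nfa_states N \<and> Q \<subseteq> ca_states A
   \<and> \<tau> \<subseteq> Ty A \<and> m \<in> insert Pre (insert Bnd (Inb ` Pow (Ty A)))"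
proof
  assume "G ol P Q \<tau> m \<in> St A N"
  then obtain ol' P' Q' \<tau>' m' where "(ol',P',Q',\<tau>',m') \<in> insert None (Some ` ca_alph A) \<times> Pow (nfa_states N) \<times> Pow (ca_states A)
      \<times> Pow (Ty A) \<times> insert Pre (insert Bnd (Inb ` Pow (Ty A)))" "G ol P Q \<tau> m = G ol' P' Q' \<tau>' m'"
    unfolding St_def by auto
  then show "ol \<in> insert None (Some ` ca_alph A) \<and> P \<subseteq> nfa_states N \<and> Q \<subseteq> ca_states A
   \<and> \<tau> \<subseteq> Ty A \<and> m \<in> insert Pre (insert Bnd (Inb ` Pow (Ty A)))" by simp
next
  assume "ol \<in> insert None (Some ` ca_alph A) \<and> P \<subseteq> nfa_states N \<and> Q \<subseteq> ca_states A
   \<and> \<tau> \<subseteq> Ty A \<and> m \<in> insert Pre (insert Bnd (Inb ` Pow (Ty A)))"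
  then have "(ol,P,Q,\<tau>,m) \<in> insert None (Some ` ca_alph A) \<times> Pow (nfa_states N) \<times> Pow (ca_states A)
      \<times> Pow (Ty A) \<times> insert Pre (insert Bnd (Inb ` Pow (Ty A)))" by simp
  then show "G ol P Q \<tau> m \<in> St A N" unfolding St_def by (rule image_eqI[rotated]) simp
qed

lemma finite_St: "cost_aut_wf A \<Longrightarrow> nfa_wf S N \<Longrightarrow> finite (St A N)"
proof -
  assume a: "cost_aut_wf A" "nfa_wf S N"
  have f1: "finite (ca_states A)" "finite (ca_alph A)" using a(1) unfolding cost_aut_wf_def by blast+
  have f2: "finite (nfa_states N)" using a(2) unfolding nfa_wf_def by blast
  have fT: "finite (Ty A)" using f1 unfolding Ty_def by simp
  show ?thesis unfolding St_def
    using f1 f2 fT by (intro finite_imageI finite_cartesian_product) simp_all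
qed

definition Bq :: "('s,'a,'t) cost_aut \<Rightarrow> (nat,'a) nfa \<Rightarrow> (('a,'s) gs, 'a + 't set) buchi" where
  "Bq A N = \<lparr>bu_states = St A N,
     bu_init = {G None (nfa_init N) (ca_init A) \<tau> Pre | \<tau>. \<tau> \<subseteq> Ty A \<and> tcomp \<tau> \<tau> \<subseteq> \<tau>},
     bu_trans = {(q,x,q'). q \<in> St A N \<and> x \<in> game_alph A \<and> q' \<in> St A N \<and> gstep A N q x q'},
     bu_acc = {q \<in> St A N. gmd q = Bnd}\<rparr>"

lemma Bq_wf: "cost_aut_wf A \<Longrightarrow> nfa_wf (ca_alph A) N \<Longrightarrow> buchi_wf (game_alph A) (Bq A N)"
proof -
  assume a: "cost_aut_wf A" "nfa_wf (ca_alph A) N"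
  have i1: "ca_init A \<subseteq> ca_states A" using a(1) unfolding cost_aut_wf_def by blast
  have i2: "nfa_init N \<subseteq> nfa_states N" using a(2) unfolding nfa_wf_def by blast
  have "bu_init (Bq A N) \<subseteq> St A N"
  proof
    fix q assume "q \<in> bu_init (Bq A N)"
    then obtain \<tau> where "q = G None (nfa_init N) (ca_init A) \<tau> Pre" "\<tau> \<subseteq> Ty A" unfolding Bq_def by auto
    then show "q \<in> St A N" using i1 i2 by (simp add: St_iff)
  qed
  moreover have "bu_acc (Bq A N) \<subseteq> St A N" unfolding Bq_def by auto
  moreover have "bu_trans (Bq A N) \<subseteq> St A N \<times> game_alph A \<times> St A N" unfolding Bq_def by auto
  moreover have "finite (St A N)" using finite_St a by blast
  ultimately show ?thesis unfolding buchi_wf_def by (simp add: Bq_def)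
qed

lemma wf_big: "cost_aut_wf A \<Longrightarrow> \<forall>c>ca_n A. ca_incr A c = {} \<and> ca_reset A c = {}"
  unfolding cost_aut_wf_def by blast
lemma wf_reset: "cost_aut_wf A \<Longrightarrow> t \<in> ca_reset A c \<Longrightarrow> c \<le> ca_n A"
  using wf_big[of A] by (metis empty_iff not_le)
lemma wf_incr: "cost_aut_wf A \<Longrightarrow> t \<in> ca_incr A c \<Longrightarrow> c \<le> ca_n A"
  using wf_big[of A] by (metis empty_iff not_le)
lemma wf_trans: "cost_aut_wf A \<Longrightarrow> t \<in> ca_trans A \<Longrightarrow> ca_src A t \<in> ca_states A \<and> ca_tgt A t \<in> ca_states A \<and> ca_lbl A t \<in> ca_alph A"
  unfolding cost_aut_wf_def by blast
lemma B_alph_sub: "D \<in> B_alph A \<Longrightarrow> D \<subseteq> ca_trans A"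
  unfolding B_alph_def by auto

lemma stp_Ty: "cost_aut_wf A \<Longrightarrow> D \<subseteq> ca_trans A \<Longrightarrow> stp A D \<subseteq> Ty A"
proof
  fix e assume a: "cost_aut_wf A" "D \<subseteq> ca_trans A" "e \<in> stp A D"
  then obtain t where t: "t \<in> D" "e = (ca_src A t, ca_tgt A t, {c. t \<in> ca_reset A c}, {c. t \<in> ca_incr A c})"
    by (elim stpE)
  have "ca_src A t \<in> ca_states A" "ca_tgt A t \<in> ca_states A" using wf_trans[OF a(1)] a(2) t(1) by blast+
  moreover have "{c. t \<in> ca_reset A c} \<subseteq> {..ca_n A}" "{c. t \<in> ca_incr A c} \<subseteq> {..ca_n A}"
    using wf_reset[OF a(1)] wf_incr[OF a(1)] by blast+
  ultimately show "e \<in> Ty A" unfolding Ty_def t(2) by simp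
qed

lemma ptyp_Ty: assumes a1: "cost_aut_wf A" and a2: "\<And>m. d m \<subseteq> ca_trans A" shows "ptyp A d i j \<subseteq> Ty A"
proof
  fix e assume "e \<in> ptyp A d i j"
  then obtain p where p: "i < j" "fpath A d i j p" "e = (ca_src A (p i), ca_tgt A (p (j - 1)), rsets A p i j, isets A p i j)"
    by (elim ptypE)
  have a: "cost_aut_wf A" "\<And>m. d m \<subseteq> ca_trans A" using a1 a2 by auto
  have "p i \<in> d i" "p (j - 1) \<in> d (j - 1)" using p unfolding fpath_def by simp_all
  then have "p i \<in> ca_trans A" "p (j - 1) \<in> ca_trans A" using a(2) by blast+
  moreover have "rsets A p i j \<subseteq> {..ca_n A}" "isets A p i j \<subseteq> {..ca_n A}"
    unfolding rsets_def isets_def using wf_reset[OF a(1)] wf_incr[OF a(1)] by blast+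
  moreover have "ca_src A (p i) \<in> ca_states A" "ca_tgt A (p (j - 1)) \<in> ca_states A"
    using wf_trans[OF a(1)] calculation(1,2) by blast+
  ultimately show "e \<in> Ty A" unfolding Ty_def p(3) by simp
qed

lemma Rch_sub: assumes a1: "cost_aut_wf A" and a2: "\<And>m. d m \<subseteq> ca_trans A" shows "Rch A d m \<subseteq> ca_states A"
proof (cases m)
  case 0
  then show ?thesis using a1 unfolding cost_aut_wf_def by (simp only: Rch.simps)
next
  case (Suc k)
  show ?thesis
  proof
    fix s assume "s \<in> Rch A d m"
    then obtain t where t: "t \<in> d k" "s = ca_tgt A t" unfolding Suc by (auto simp: post_def)
    then have "t \<in> ca_trans A" using a2 by blast
    then show "s \<in> ca_states A" using wf_trans[OF a1] t(2) by simp
  qed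
qed




lemma sound:
  assumes wfA: "cost_aut_wf A" and wfN: "nfa_wf (ca_alph A) N" and acc: "buchi_accepts (Bq A N) w"
  shows "w \<in> win_inf A {u. nfa_accepts N u}"
proof -
  from acc obtain r where r0: "r 0 \<in> bu_init (Bq A N)" and rt: "\<forall>k. (r k, w k, r (Suc k)) \<in> bu_trans (Bq A N)"
    and racc: "\<exists>\<^sub>\<infinity>k. r k \<in> bu_acc (Bq A N)" unfolding buchi_accepts_def by blast
  have tr: "r k \<in> St A N \<and> w k \<in> game_alph A \<and> gstep A N (r k) (w k) (r (Suc k))" for k
    using rt unfolding Bq_def by auto
  obtain \<tau>0 where i0: "r 0 = G None (nfa_init N) (ca_init A) \<tau>0 Pre" "\<tau>0 \<subseteq> Ty A" "tcomp \<tau>0 \<tau>0 \<subseteq> \<tau>0"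
    using r0 unfolding Bq_def by auto
  have ev: "\<exists>x. w k = Inl x \<and> gol (r (Suc k)) = Some x" if "gol (r k) = None" for k
  proof (cases "w k")
    case (Inl x)
    then show ?thesis using tr[of k] by (auto simp: gstep_Inl)
  next
    case (Inr D)
    then show ?thesis using tr[of k] that by (auto simp: gstep_Inr)
  qed
  have od: "\<exists>D. w k = Inr D \<and> gol (r (Suc k)) = None \<and> (\<forall>t\<in>D. ca_lbl A t = y)" if "gol (r k) = Some y" for k y
  proof (cases "w k")
    case (Inl x)
    then show ?thesis using tr[of k] that by (auto simp: gstep_Inl)
  next
    case (Inr D)
    then show ?thesis using tr[of k] that by (auto simp: gstep_Inr)
  qed
  have ss: "Suc (Suc (2 * m)) = 2 * Suc m" for m :: nat by simp
  have par: "gol (r (2 * m)) = None" for m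
  proof (induction m)
    case 0
    then show ?case using i0 by simp
  next
    case (Suc m)
    then obtain x where "gol (r (Suc (2 * m))) = Some x" using ev by blast
    then show ?case using od ss by metis
  qed
  define a where "a m = (case w (2 * m) of Inl x \<Rightarrow> x | Inr _ \<Rightarrow> undefined)" for m
  define d where "d m = (case w (Suc (2 * m)) of Inr D \<Rightarrow> D | Inl _ \<Rightarrow> {})" for m
  have wa: "w (2 * m) = Inl (a m) \<and> gol (r (Suc (2 * m))) = Some (a m)" for m
    using ev[OF par[of m]] unfolding a_def by auto
  have wd: "w (Suc (2 * m)) = Inr (d m) \<and> (\<forall>t\<in>d m. ca_lbl A t = a m)" for m
    using od[of "Suc (2 * m)" "a m"] wa[of m] unfolding d_def by auto
  have wint: "w = interleave a d"
  proof
    fix k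
    show "w k = interleave a d k"
    proof (cases "even k")
      case True
      then have "k = 2 * (k div 2)" by simp
      then show ?thesis using wa[of "k div 2"] True unfolding interleave_def by metis
    next
      case False
      then have "k = Suc (2 * (k div 2))" by simp
      then show ?thesis using wd[of "k div 2"] False unfolding interleave_def by metis
    qed
  qed
  have aA: "a m \<in> ca_alph A" for m
    using tr[of "2 * m"] wa[of m] unfolding game_alph_def by auto
  have dB: "d m \<in> B_alph A" for m
    using tr[of "Suc (2 * m)"] wd[of m] unfolding game_alph_def by auto
  have dT: "d m \<subseteq> ca_trans A" for m using dB B_alph_sub by blast
  have st1: "gP (r (Suc (2 * m))) = npost N (gP (r (2 * m))) (a m) \<and> gQ (r (Suc (2 * m))) = gQ (r (2 * m))
     \<and> gT (r (Suc (2 * m))) = gT (r (2 * m)) \<and> gmd (r (Suc (2 * m))) = gmd (r (2 * m))" for m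
    using tr[of "2 * m"] wa[of m] by (simp add: gstep_Inl)
  have st2: "gP (r (2 * Suc m)) = gP (r (Suc (2 * m))) \<and> gQ (r (2 * Suc m)) = post A (gQ (r (Suc (2 * m)))) (d m)
     \<and> gT (r (2 * Suc m)) = gT (r (Suc (2 * m)))
     \<and> (gP (r (Suc (2 * m))) \<inter> nfa_final N \<noteq> {} \<longrightarrow> gQ (r (2 * Suc m)) \<inter> ca_final A \<noteq> {})
     \<and> mstep (gT (r (Suc (2 * m)))) (gQ (r (2 * Suc m))) (stp A (d m)) (gmd (r (Suc (2 * m)))) (gmd (r (2 * Suc m)))" for m
  proof -
    have "gstep A N (r (Suc (2 * m))) (Inr (d m)) (r (2 * Suc m))"
      using tr[of "Suc (2 * m)"] wd[of m] ss[of m] by metis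
    then show ?thesis unfolding gstep_Inr by blast
  qed
  have inv: "gP (r (2 * m)) = Ps N a m \<and> gQ (r (2 * m)) = Rch A d m \<and> gT (r (2 * m)) = \<tau>0" for m
  proof (induction m)
    case 0
    then show ?case using i0 by simp
  next
    case (Suc m)
    then show ?case using st1[of m] st2[of m] by simp
  qed
  have inv1: "gP (r (Suc (2 * m))) = Ps N a (Suc m) \<and> gQ (r (Suc (2 * m))) = Rch A d m \<and> gT (r (Suc (2 * m))) = \<tau>0" for m
    using st1[of m] inv[of m] by simp
  have mst: "mstep \<tau>0 (Rch A d (Suc m)) (stp A (d m)) (gmd (r (2 * m))) (gmd (r (2 * Suc m)))" for m
  proof -
    have e1: "gT (r (Suc (2 * m))) = \<tau>0" using inv1[of m] by blast
    have e2: "gQ (r (2 * Suc m)) = Rch A d (Suc m)" using inv[of "Suc m"] by blast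
    have e3: "gmd (r (Suc (2 * m))) = gmd (r (2 * m))" using st1[of m] by blast
    show ?thesis using st2[of m] unfolding e1 e2 e3 by blast
  qed
  have Kcheck: "Rch A d m \<inter> bad \<tau>0 = {}" if "gmd (r (2 * m)) = Bnd" for m
  proof (cases m)
    case 0
    then show ?thesis using that i0 by simp
  next
    case (Suc m')
    then show ?thesis using mstep_Bnd[of \<tau>0 "Rch A d (Suc m')"] mst[of m'] that by simp
  qed
  have invB: "gmd (r (2 * m)) \<noteq> Pre \<and> (gmd (r (2 * m)) = Bnd \<longrightarrow> ptyp A d b m \<subseteq> \<tau>0)
      \<and> (\<forall>X. gmd (r (2 * m)) = Inb X \<longrightarrow> ptyp A d b m \<subseteq> X \<union> tcomp \<tau>0 X)"
    if "b \<le> m" "gmd (r (2 * b)) = Bnd" for b m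
    using that(1)
  proof (induction m rule: dec_induct)
    case base
    have "ptyp A d b b = {}" unfolding ptyp_def by simp
    then show ?case using that(2) by simp
  next
    case (step m)
    let ?S = "stp A (d m)"
    have pS: "ptyp A d b (Suc m) = (if b = m then ?S else tcomp (ptyp A d b m) ?S)"
      using step(1) by (simp add: ptyp_self ptyp_Suc)
    have cl: "\<tau>0 \<union> tcomp \<tau>0 \<tau>0 \<subseteq> \<tau>0" using i0 by simp
    show ?case
    proof (cases "gmd (r (2 * m))")
      case Pre
      then show ?thesis using step by simp
    next
      case Bnd
      then have h: "ptyp A d b m \<subseteq> \<tau>0" using step by simp
      have sub: "ptyp A d b (Suc m) \<subseteq> ?S \<union> tcomp \<tau>0 ?S"
        using pS tcomp_mono[OF h, of ?S ?S] by auto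
      have "gmd (r (2 * Suc m)) = Inb ?S \<or> (?S = \<tau>0 \<and> gmd (r (2 * Suc m)) = Bnd)"
        using mst[of m] Bnd by auto
      then show ?thesis
      proof
        assume "gmd (r (2 * Suc m)) = Inb ?S"
        then show ?thesis using sub by simp
      next
        assume a: "?S = \<tau>0 \<and> gmd (r (2 * Suc m)) = Bnd"
        then show ?thesis using sub cl by auto
      qed
    next
      case (Inb X)
      then have h: "ptyp A d b m \<subseteq> X \<union> tcomp \<tau>0 X" using step by simp
      have "b \<noteq> m" using Inb that(2) by auto
      then have "ptyp A d b (Suc m) = tcomp (ptyp A d b m) ?S" using pS by simp
      also have "\<dots> \<subseteq> tcomp (X \<union> tcomp \<tau>0 X) ?S" using tcomp_mono[OF h, of ?S ?S] by simp
      also have "\<dots> = tcomp X ?S \<union> tcomp \<tau>0 (tcomp X ?S)" by (simp add: tcomp_Un_left tcomp_assoc)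
      finally have sub: "ptyp A d b (Suc m) \<subseteq> tcomp X ?S \<union> tcomp \<tau>0 (tcomp X ?S)" .
      have "gmd (r (2 * Suc m)) = Inb (tcomp X ?S) \<or> (tcomp X ?S = \<tau>0 \<and> gmd (r (2 * Suc m)) = Bnd)"
        using mst[of m] Inb by auto
      then show ?thesis
      proof
        assume "gmd (r (2 * Suc m)) = Inb (tcomp X ?S)"
        then show ?thesis using sub by simp
      next
        assume a: "tcomp X ?S = \<tau>0 \<and> gmd (r (2 * Suc m)) = Bnd"
        then show ?thesis using sub cl by auto
      qed
    qed
  qed
  have Kunb: "\<exists>m>M. gmd (r (2 * m)) = Bnd" for M
  proof -
    obtain k where k: "k > Suc (2 * M)" "r k \<in> bu_acc (Bq A N)" using racc unfolding INFM_nat by blast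
    then have g: "gmd (r k) = Bnd" unfolding Bq_def by simp
    show ?thesis
    proof (cases "even k")
      case True
      then have "k = 2 * (k div 2)" by simp
      then show ?thesis using g k(1) by (intro exI[of _ "k div 2"]) (metis Suc_lessD less_mult_imp_div_less mult.commute nat_mult_less_cancel_disj)
    next
      case False
      then have "k = Suc (2 * (k div 2))" by simp
      then show ?thesis using g k(1) st1[of "k div 2"] by (intro exI[of _ "k div 2"]) (metis Suc_less_SucD nat_mult_less_cancel_disj)
    qed
  qed
  have viol: "\<exists>\<^sub>\<infinity>j. \<rho> j \<in> ca_reset A c"
    if run: "inf_run_in A d \<rho>" and inc: "\<exists>\<^sub>\<infinity>j. \<rho> j \<in> ca_incr A c" for \<rho> c
  proof (rule ccontr)
    assume "\<not> (\<exists>\<^sub>\<infinity>j. \<rho> j \<in> ca_reset A c)"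
    then obtain N0 where N0: "\<And>j. j > N0 \<Longrightarrow> \<rho> j \<notin> ca_reset A c" unfolding INFM_nat by auto
    define K' where "K' = {m. gmd (r (2 * m)) = Bnd \<and> N0 < m}"
    have "infinite K'" unfolding infinite_nat_iff_unbounded K'_def
    proof
      fix M
      obtain m where "m > M + N0" "gmd (r (2 * m)) = Bnd" using Kunb by blast
      then show "\<exists>m>M. m \<in> {m. gmd (r (2 * m)) = Bnd \<and> N0 < m}" by (intro exI[of _ m]) simp
    qed
    moreover have "(\<lambda>m. ca_src A (\<rho> m)) ` K' \<subseteq> ca_states A"
    proof
      fix x assume "x \<in> (\<lambda>m. ca_src A (\<rho> m)) ` K'"
      then obtain m where "x = ca_src A (\<rho> m)" by blast
      moreover have "\<rho> m \<in> ca_trans A" using run dT unfolding inf_run_in_def by blast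
      ultimately show "x \<in> ca_states A" using wf_trans[OF wfA] by blast
    qed
    then have "finite ((\<lambda>m. ca_src A (\<rho> m)) ` K')"
      using wfA unfolding cost_aut_wf_def by (meson finite_subset)
    ultimately obtain s where s: "infinite ((\<lambda>m. ca_src A (\<rho> m)) -` {s} \<inter> K')"
      using inf_img_fin_dom' by blast
    let ?K = "(\<lambda>m. ca_src A (\<rho> m)) -` {s} \<inter> K'"
    obtain b1 where b1: "b1 \<in> ?K" using s by (metis finite.emptyI ex_in_conv)
    obtain j where j: "j > b1" "\<rho> j \<in> ca_incr A c" using inc unfolding INFM_nat by blast
    obtain b2 where b2: "b2 > j" "b2 \<in> ?K" using s unfolding infinite_nat_iff_unbounded by blast
    have b1K: "gmd (r (2 * b1)) = Bnd" "N0 < b1" "ca_src A (\<rho> b1) = s" using b1 unfolding K'_def by auto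
    have b2K: "gmd (r (2 * b2)) = Bnd" "ca_src A (\<rho> b2) = s" using b2 unfolding K'_def by auto
    have lt: "b1 < b2" using j b2 by simp
    have "ptyp A d b1 b2 \<subseteq> \<tau>0" using invB[of b1 b2] lt b1K b2K by simp
    moreover have "(ca_src A (\<rho> b1), ca_tgt A (\<rho> (b2 - 1)), rsets A \<rho> b1 b2, isets A \<rho> b1 b2) \<in> ptyp A d b1 b2"
      using ptypI[OF lt inf_run_fpath[OF run]] .
    moreover have "ca_tgt A (\<rho> (b2 - 1)) = s"
    proof -
      have "ca_tgt A (\<rho> (b2 - 1)) = ca_src A (\<rho> (Suc (b2 - 1)))" using run unfolding inf_run_in_def by blast
      moreover have "Suc (b2 - 1) = b2" using lt by simp
      ultimately show ?thesis using b2K by simp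
    qed
    moreover have "c \<in> isets A \<rho> b1 b2" unfolding isets_def using j b2 by (auto intro!: exI[of _ j])
    moreover have "c \<notin> rsets A \<rho> b1 b2" unfolding rsets_def using N0 b1K by auto
    ultimately have "(s, s, rsets A \<rho> b1 b2, isets A \<rho> b1 b2) \<in> \<tau>0" "c \<in> isets A \<rho> b1 b2" "c \<notin> rsets A \<rho> b1 b2"
      using b1K by auto
    then have "s \<in> bad \<tau>0" unfolding bad_def by blast
    moreover have "s \<in> Rch A d b1"
    proof -
      obtain b' where "b1 = Suc b'" using b1K by (cases b1) auto
      moreover have "ca_tgt A (\<rho> b') = ca_src A (\<rho> (Suc b'))" using run unfolding inf_run_in_def by blast
      ultimately show ?thesis using Rch_run[OF run, of b'] b1K by simp
    qed
    ultimately show False using Kcheck[OF b1K(1)] by blast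
  qed
  have fin: "\<exists>ts. fin_run_in A d i ts \<and> fin_run_accepting A ts"
    if i1: "1 \<le> i" and i2: "map a [0..<i] \<in> {u. nfa_accepts N u}" for i
  proof -
    obtain m where m: "i = Suc m" using i1 by (cases i) auto
    have "nfa_accepts N (map a [0..<Suc m])" using i2 m by simp
    then have "Ps N a (Suc m) \<inter> nfa_final N \<noteq> {}" using Ps_acc[of N a "Suc m"] by blast
    moreover have "gP (r (Suc (2 * m))) = Ps N a (Suc m)" using inv1[of m] by blast
    moreover have e2: "gQ (r (2 * Suc m)) = Rch A d (Suc m)" using inv[of "Suc m"] by blast
    ultimately have "Rch A d (Suc m) \<inter> ca_final A \<noteq> {}" using st2[of m] by metis
    then show ?thesis using m finrun_Rch[of A d m] by blast
  qed
  show ?thesis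
    unfolding win_inf_def
    using wint aA dB wd viol fin by blast
qed




lemma complete:
  assumes wfA: "cost_aut_wf A" and wfN: "nfa_wf (ca_alph A) N" and win: "w \<in> win_inf A {u. nfa_accepts N u}"
  shows "buchi_accepts (Bq A N) w"
proof -
  from win obtain a d where wint: "w = interleave a d"
    and c1: "\<forall>i. a i \<in> ca_alph A \<and> d i \<in> B_alph A"
    and c2: "\<forall>i. \<forall>t\<in>d i. ca_lbl A t = a i"
    and c3: "\<forall>\<rho>. inf_run_in A d \<rho> \<longrightarrow>
          (\<forall>c \<le> ca_n A. (\<exists>\<^sub>\<infinity>j. \<rho> j \<in> ca_incr A c) \<longrightarrow> (\<exists>\<^sub>\<infinity>j. \<rho> j \<in> ca_reset A c))"
    and c4: "\<forall>i \<ge> 1. map a [0..<i] \<in> {u. nfa_accepts N u} \<longrightarrow>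
          (\<exists>ts. fin_run_in A d i ts \<and> fin_run_accepting A ts)"
    unfolding win_inf_def by blast
  have dT: "d m \<subseteq> ca_trans A" for m using c1 B_alph_sub by blast
  have pT: "ptyp A d i j \<in> Pow (Ty A)" for i j using ptyp_Ty[of A d i j] wfA dT by blast
  have fTy: "finite (Ty A)"
  proof -
    have "finite (ca_states A)" using wfA unfolding cost_aut_wf_def by blast
    then show ?thesis unfolding Ty_def by simp
  qed
  then have fP: "finite (Pow (Ty A))" by simp
  obtain hidx where hb: "bij_betw hidx (Pow (Ty A)) {0..<card (Pow (Ty A))}"
    using ex_bij_betw_finite_nat[OF fP] by blast
  define f where "f X = hidx (ptyp A d (Min X) (Max X))" for X
  have "infinite {0::nat<..}" unfolding infinite_nat_iff_unbounded by (metis greaterThan_iff less_Suc_eq_0_disj lessI)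
  moreover have "\<forall>X. X \<subseteq> {0<..} \<and> finite X \<and> card X = 2 \<longrightarrow> f X < card (Pow (Ty A))"
  proof (intro allI impI)
    fix X :: "nat set"
    have "hidx ` Pow (Ty A) = {0..<card (Pow (Ty A))}" using hb unfolding bij_betw_def by blast
    then have "hidx (ptyp A d (Min X) (Max X)) \<in> {0..<card (Pow (Ty A))}" using pT[of "Min X" "Max X"] by blast
    then show "f X < card (Pow (Ty A))" unfolding f_def by simp
  qed
  ultimately obtain H t where H: "H \<subseteq> {0<..}" "infinite H"
    and Ht: "\<forall>X. X \<subseteq> H \<and> finite X \<and> card X = 2 \<longrightarrow> f X = t"
    using Ramsey[where Z = "{0<..}" and r = 2 and f = f and s = "card (Pow (Ty A))"] by blast
  have unb: "\<exists>n>m. n \<in> H" for m using H(2) infinite_nat_iff_unbounded by blast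
  have h1: "hidx (ptyp A d x y) = t" if "x \<in> H" "y \<in> H" "x < y" for x y
  proof -
    have "f {x, y} = t" using Ht that by simp
    moreover have "Min {x, y} = x" "Max {x, y} = y" using that by auto
    ultimately show ?thesis unfolding f_def by simp
  qed
  obtain x0 where x0: "x0 \<in> H" using unb by blast
  obtain y0 where y0: "y0 \<in> H" "x0 < y0" using unb by blast
  obtain z0 where z0: "z0 \<in> H" "y0 < z0" using unb by blast
  define \<tau> where "\<tau> = ptyp A d x0 y0"
  have hom: "\<forall>x\<in>H. \<forall>y\<in>H. x < y \<longrightarrow> ptyp A d x y = \<tau>"
  proof (intro ballI impI)
    fix x y assume "x \<in> H" "y \<in> H" "x < y"
    then have "hidx (ptyp A d x y) = hidx (ptyp A d x0 y0)" using h1 x0 y0 by simp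
    moreover have "inj_on hidx (Pow (Ty A))" using hb unfolding bij_betw_def by blast
    ultimately show "ptyp A d x y = \<tau>" unfolding \<tau>_def using inj_onD pT by metis
  qed
  have tTy: "\<tau> \<subseteq> Ty A" unfolding \<tau>_def using pT by blast
  have tcl: "tcomp \<tau> \<tau> \<subseteq> \<tau>"
  proof -
    have "ptyp A d x0 z0 = tcomp (ptyp A d x0 y0) (ptyp A d y0 z0)" using ptyp_split y0 z0 by blast
    then show ?thesis using hom x0 y0 z0 by (metis order.strict_trans order_refl)
  qed
  define h0 where "h0 = (LEAST h. h \<in> H)"
  have h0: "h0 \<in> H" "\<And>h. h \<in> H \<Longrightarrow> h0 \<le> h" unfolding h0_def using x0 by (auto intro: LeastI Least_le)
  have h0pos: "0 < h0" using h0 H(1) by auto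
  define pv where "pv m = Max {h \<in> H. h \<le> m}" for m
  have P1: "pv m \<in> H \<and> pv m \<le> m \<and> (\<forall>h\<in>H. h \<le> m \<longrightarrow> h \<le> pv m)" if "h0 \<le> m" for m
  proof -
    have fin: "finite {h \<in> H. h \<le> m}" by (rule finite_subset[of _ "{..m}"]) auto
    have ne: "{h \<in> H. h \<le> m} \<noteq> {}" using h0 that by blast
    show ?thesis using Max_in[OF fin ne] Max_ge[OF fin] unfolding pv_def by blast
  qed
  have P2: "pv m = m" if "m \<in> H" for m
    using P1[of m] h0(2)[OF that] that by (meson antisym order_refl)
  have P3: "pv (Suc m) = pv m" if "h0 \<le> m" "Suc m \<notin> H" for m
  proof -
    have a1: "pv (Suc m) \<in> H" "pv (Suc m) \<le> Suc m" using P1[of "Suc m"] that by auto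
    then have "pv (Suc m) \<le> m" using that by (metis le_SucE)
    then have "pv (Suc m) \<le> pv m" using P1[OF that(1)] a1 by blast
    moreover have "pv m \<le> pv (Suc m)" using P1[OF that(1)] P1[of "Suc m"] that by auto
    ultimately show ?thesis by simp
  qed
  have check: "Rch A d h \<inter> bad \<tau> = {}" if hH: "h \<in> H" for h
  proof (rule ccontr)
    assume "Rch A d h \<inter> bad \<tau> \<noteq> {}"
    then obtain s R I c where s: "s \<in> Rch A d h" "(s,s,R,I) \<in> \<tau>" "c \<in> I" "c \<notin> R"
      unfolding bad_def by blast
    have hpos: "0 < h" using H(1) hH by auto
    obtain \<rho> where \<rho>: "inf_run_in A d \<rho>" "\<forall>c\<in>I. \<exists>\<^sub>\<infinity>j. \<rho> j \<in> ca_incr A c"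
        "\<forall>c. c \<notin> R \<longrightarrow> (\<forall>j\<ge>h. \<rho> j \<notin> ca_reset A c)"
      using glue[OF H(2) hH hpos hom s(1) s(2)] by blast
    have "c \<le> ca_n A" using s(2,3) tTy unfolding Ty_def by auto
    then have "\<exists>\<^sub>\<infinity>j. \<rho> j \<in> ca_reset A c" using c3 \<rho> s(3) by blast
    then obtain j where "j > h" "\<rho> j \<in> ca_reset A c" unfolding INFM_nat by blast
    then show False using \<rho>(3) s(4) by auto
  qed
  define md where "md m = (if m < h0 then Pre else if m \<in> H then Bnd else Inb (ptyp A d (pv m) m))" for m
  have mdSt: "md m \<in> insert Pre (insert Bnd (Inb ` Pow (Ty A)))" for m
    unfolding md_def using pT[of "pv m" m] by auto
  have mst: "mstep \<tau> (Rch A d (Suc m)) (stp A (d m)) (md m) (md (Suc m))" for m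
  proof (cases "Suc m < h0")
    case True
    then show ?thesis unfolding md_def by simp
  next
    case False
    show ?thesis
    proof (cases "Suc m = h0")
      case True
      then have "md m = Pre" "md (Suc m) = Bnd" unfolding md_def using h0 by auto
      then show ?thesis using check[OF h0(1)] True by simp
    next
      case False
      then have mh: "h0 \<le> m" using \<open>\<not> Suc m < h0\<close> by simp
      have pvm: "pv m \<in> H" "pv m \<le> m" using P1[OF mh] by auto
      show ?thesis
      proof (cases "Suc m \<in> H")
        case True
        then have mdS: "md (Suc m) = Bnd" unfolding md_def using mh by simp
        have ck: "Rch A d (Suc m) \<inter> bad \<tau> = {}" using check[OF True] .
        show ?thesis
        proof (cases "m \<in> H")
          case True
          then have "md m = Bnd" unfolding md_def using mh by simp
          moreover have "stp A (d m) = \<tau>" using hom True \<open>Suc m \<in> H\<close> ptyp_self by (metis lessI)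
          ultimately show ?thesis using mdS ck by simp
        next
          case False
          then have mdm: "md m = Inb (ptyp A d (pv m) m)" unfolding md_def using mh by simp
          have lt: "pv m < m" using pvm False by (metis le_neq_implies_less)
          have "tcomp (ptyp A d (pv m) m) (stp A (d m)) = ptyp A d (pv m) (Suc m)" by (rule sym[OF ptyp_Suc[OF lt]])
          also have "\<dots> = \<tau>" using hom pvm \<open>Suc m \<in> H\<close> lt by simp
          finally show ?thesis using mdm mdS ck by simp
        qed
      next
        case False
        then have mdS: "md (Suc m) = Inb (ptyp A d (pv m) (Suc m))" unfolding md_def using mh P3[OF mh] by simp
        show ?thesis
        proof (cases "m \<in> H")
          case True
          then have "md m = Bnd" "pv m = m" unfolding md_def using mh P2 by auto
          then show ?thesis using mdS ptyp_self[of A d m] by simp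
        next
          case False
          then have mdm: "md m = Inb (ptyp A d (pv m) m)" unfolding md_def using mh by simp
          have lt: "pv m < m" using pvm False by (metis le_neq_implies_less)
          show ?thesis using mdm mdS ptyp_Suc[OF lt, of A d] by simp
        qed
      qed
    qed
  qed
  define r where "r k = (if even k then G None (Ps N a (k div 2)) (Rch A d (k div 2)) \<tau> (md (k div 2))
      else G (Some (a (k div 2))) (Ps N a (Suc (k div 2))) (Rch A d (k div 2)) \<tau> (md (k div 2)))" for k
  have r2: "r (2 * m) = G None (Ps N a m) (Rch A d m) \<tau> (md m)" for m unfolding r_def by simp
  have r2s: "r (Suc (2 * m)) = G (Some (a m)) (Ps N a (Suc m)) (Rch A d m) \<tau> (md m)" for m unfolding r_def by simp
  have w2: "w (2 * m) = Inl (a m)" for m unfolding wint interleave_def by simp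
  have w2s: "w (Suc (2 * m)) = Inr (d m)" for m unfolding wint interleave_def by simp
  have PsS: "Ps N a m \<subseteq> nfa_states N" for m using Ps_sub[OF wfN] .
  have RchS: "Rch A d m \<subseteq> ca_states A" for m using Rch_sub[of A d m] wfA dT by blast
  have aA: "a m \<in> ca_alph A" for m using c1 by blast
  have rSt: "r k \<in> St A N" for k
    unfolding r_def using PsS RchS aA tTy mdSt by (simp add: St_iff del: Ps.simps Rch.simps)
  have wG: "w k \<in> game_alph A" for k
    unfolding wint interleave_def game_alph_def using c1 by auto
  have g1: "gstep A N (r (2 * m)) (w (2 * m)) (r (Suc (2 * m)))" for m
    unfolding r2 r2s w2 by simp
  have g2: "gstep A N (r (Suc (2 * m))) (w (Suc (2 * m))) (r (Suc (Suc (2 * m))))" for m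
  proof -
    have rr: "r (Suc (Suc (2 * m))) = G None (Ps N a (Suc m)) (Rch A d (Suc m)) \<tau> (md (Suc m))"
      using r2[of "Suc m"] by simp
    have ck: "Ps N a (Suc m) \<inter> nfa_final N \<noteq> {} \<longrightarrow> Rch A d (Suc m) \<inter> ca_final A \<noteq> {}"
    proof
      assume "Ps N a (Suc m) \<inter> nfa_final N \<noteq> {}"
      then have "nfa_accepts N (map a [0..<Suc m])" using Ps_acc[of N a "Suc m"] by blast
      moreover have "1 \<le> Suc m" by simp
      ultimately have "\<exists>ts. fin_run_in A d (Suc m) ts \<and> fin_run_accepting A ts" using c4 by blast
      then show "Rch A d (Suc m) \<inter> ca_final A \<noteq> {}" using finrun_Rch[of A d m] by blast
    qed
    have "gstep A N (G (Some (a m)) (Ps N a (Suc m)) (Rch A d m) \<tau> (md m)) (Inr (d m))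
             (G None (Ps N a (Suc m)) (Rch A d (Suc m)) \<tau> (md (Suc m)))"
    proof -
      have e: "Rch A d (Suc m) = post A (Rch A d m) (d m)" by simp
      show ?thesis
        unfolding gstep.simps
      proof (intro conjI)
        show "\<exists>x. Some (a m) = Some x \<and> (\<forall>t\<in>d m. ca_lbl A t = x)" using c2 by blast
      qed (use ck mst[of m] e in \<open>simp_all only:\<close>)
    qed
    then show ?thesis unfolding rr r2s w2s .
  qed
  have BT: "bu_trans (Bq A N) = {(q,x,q'). q \<in> St A N \<and> x \<in> game_alph A \<and> q' \<in> St A N \<and> gstep A N q x q'}"
    by (simp add: Bq_def)
  have BI: "bu_init (Bq A N) = {G None (nfa_init N) (ca_init A) \<tau> Pre | \<tau>. \<tau> \<subseteq> Ty A \<and> tcomp \<tau> \<tau> \<subseteq> \<tau>}"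
    by (simp add: Bq_def)
  have BA: "bu_acc (Bq A N) = {q \<in> St A N. gmd q = Bnd}"
    by (simp add: Bq_def)
  have gall: "(r k, w k, r (Suc k)) \<in> bu_trans (Bq A N)" for k
  proof -
    have "gstep A N (r k) (w k) (r (Suc k))"
    proof (cases "even k")
      case True
      then obtain m where k: "k = 2 * m" by (rule evenE)
      show ?thesis unfolding k by (rule g1)
    next
      case False
      then obtain m where k0: "k = 2 * m + 1" by (rule oddE)
      then have k: "k = Suc (2 * m)" by simp
      show ?thesis unfolding k by (rule g2)
    qed
    moreover have "r k \<in> St A N" "r (Suc k) \<in> St A N" "w k \<in> game_alph A" using rSt[of k] rSt[of "Suc k"] wG[of k] by auto
    ultimately show ?thesis unfolding BT by (simp only: mem_Collect_eq prod.case simp_thms)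
  qed
  have rinit: "r 0 \<in> bu_init (Bq A N)"
  proof -
    have "md 0 = Pre" unfolding md_def using h0pos by simp
    then have "r 0 = G None (nfa_init N) (ca_init A) \<tau> Pre" using r2[of 0] by simp
    moreover have "G None (nfa_init N) (ca_init A) \<tau> Pre \<in> {G None (nfa_init N) (ca_init A) \<tau> Pre | \<tau>. \<tau> \<subseteq> Ty A \<and> tcomp \<tau> \<tau> \<subseteq> \<tau>}"
      using tTy tcl by (intro CollectI exI[of _ \<tau>]) simp
    ultimately show ?thesis unfolding BI by simp
  qed
  have racc: "\<exists>\<^sub>\<infinity>k. r k \<in> bu_acc (Bq A N)"
    unfolding INFM_nat
  proof
    fix M
    obtain h where h: "h > M" "h \<in> H" using unb by blast
    have "\<not> h < h0" using h h0 by (simp add: not_less)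
    then have "md h = Bnd" unfolding md_def using h by simp
    then have "gmd (r (2 * h)) = Bnd" using r2[of h] by simp
    then have "r (2 * h) \<in> bu_acc (Bq A N)" unfolding BA using rSt[of "2 * h"] by simp
    moreover have "2 * h > M" using h by simp
    ultimately show "\<exists>k>M. r k \<in> bu_acc (Bq A N)" by blast
  qed
  show ?thesis unfolding buchi_accepts_def using rinit gall racc by blast
qed




lemma buchi_nat:
  fixes B :: "('q,'b) buchi"
  assumes wf: "buchi_wf \<Gamma> B"
  shows "\<exists>B' :: (nat,'b) buchi. buchi_wf \<Gamma> B' \<and> buchi_lang B' = buchi_lang B"
proof -
  let ?S = "bu_states B"
  have fS: "finite ?S" and iS: "bu_init B \<subseteq> ?S" and aS: "bu_acc B \<subseteq> ?S" and tS: "bu_trans B \<subseteq> ?S \<times> \<Gamma> \<times> ?S"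
    using wf unfolding buchi_wf_def by blast+
  obtain f :: "'q \<Rightarrow> nat" where inj: "inj_on f ?S"
    using finite_imp_inj_to_nat_seg[OF fS] by blast
  define g where "g = inv_into ?S f"
  have gf: "g (f q) = q" if "q \<in> ?S" for q unfolding g_def using inj that by simp
  define B' :: "(nat,'b) buchi" where "B' = \<lparr>bu_states = f ` ?S, bu_init = f ` bu_init B,
     bu_trans = (\<lambda>(q,x,q'). (f q, x, f q')) ` bu_trans B, bu_acc = f ` bu_acc B\<rparr>"
  have "buchi_wf \<Gamma> B'"
    unfolding buchi_wf_def B'_def using fS iS aS tS by auto
  moreover have "buchi_lang B' = buchi_lang B"
  proof (intro set_eqI iffI)
    fix w assume "w \<in> buchi_lang B"
    then obtain r where r: "r 0 \<in> bu_init B" "\<forall>k. (r k, w k, r (Suc k)) \<in> bu_trans B" "\<exists>\<^sub>\<infinity>k. r k \<in> bu_acc B"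
      unfolding buchi_lang_def buchi_accepts_def by blast
    have "(f \<circ> r) 0 \<in> bu_init B'" using r(1) unfolding B'_def by simp
    moreover have "((f \<circ> r) k, w k, (f \<circ> r) (Suc k)) \<in> bu_trans B'" for k
      using r(2) unfolding B'_def by (force intro: image_eqI[of _ _ "(r k, w k, r (Suc k))"])
    moreover have "\<exists>\<^sub>\<infinity>k. (f \<circ> r) k \<in> bu_acc B'"
      using r(3) unfolding B'_def by (rule INFM_mono) simp
    ultimately show "w \<in> buchi_lang B'" unfolding buchi_lang_def buchi_accepts_def by blast
  next
    fix w assume "w \<in> buchi_lang B'"
    then obtain r where r: "r 0 \<in> bu_init B'" "\<forall>k. (r k, w k, r (Suc k)) \<in> bu_trans B'" "\<exists>\<^sub>\<infinity>k. r k \<in> bu_acc B'"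
      unfolding buchi_lang_def buchi_accepts_def by blast
    have "(g \<circ> r) 0 \<in> bu_init B"
    proof -
      obtain q where "q \<in> bu_init B" "r 0 = f q" using r(1) unfolding B'_def by auto
      then show ?thesis using gf iS by auto
    qed
    moreover have "((g \<circ> r) k, w k, (g \<circ> r) (Suc k)) \<in> bu_trans B" for k
    proof -
      obtain q x q' where q: "(q,x,q') \<in> bu_trans B" "r k = f q" "w k = x" "r (Suc k) = f q'"
        using spec[OF r(2), of k] unfolding B'_def by auto
      then have "q \<in> ?S" "q' \<in> ?S" using tS by auto
      then show ?thesis using q gf by simp
    qed
    moreover have "\<exists>\<^sub>\<infinity>k. (g \<circ> r) k \<in> bu_acc B"
      using r(3)
    proof (rule INFM_mono)
      fix k assume "r k \<in> bu_acc B'"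
      then obtain q where "q \<in> bu_acc B" "r k = f q" unfolding B'_def by auto
      then show "(g \<circ> r) k \<in> bu_acc B" using gf aS by auto
    qed
    ultimately show "w \<in> buchi_lang B" unfolding buchi_lang_def buchi_accepts_def by blast
  qed
  ultimately show ?thesis by blast
qed

theorem lemma3p1:
  fixes A :: "('s, 'a, 't) cost_aut" and L :: "'a list set"
  assumes "cost_aut_wf A"
    and "regular_lang (ca_alph A) L"
  shows "\<exists>B :: (nat, 'a + 't set) buchi.
           buchi_wf (game_alph A) B \<and> buchi_lang B = win_inf A L"
proof -
  obtain N :: "(nat, 'a) nfa" where wfN: "nfa_wf (ca_alph A) N" and L: "L = {w. nfa_accepts N w}"
    using assms(2) unfolding regular_lang_def by blast
  have "buchi_lang (Bq A N) = win_inf A L"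
    unfolding L buchi_lang_def using sound[OF assms(1) wfN] complete[OF assms(1) wfN] by blast
  moreover have "buchi_wf (game_alph A) (Bq A N)" using Bq_wf[OF assms(1) wfN] .
  ultimately show ?thesis using buchi_nat[of "game_alph A" "Bq A N"] by metis
qed


end
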